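(* The line graph $L(K_{s,s})$ of the complete bipartite graph $K_{s,s}$ with $s>2$, the Petersen graph, and the Clebsch graph are not $\mathcal{C}$-$\mathrm{MH}$.
   Context: Subgraphs are induced. A homomorphism maps edges to edges; a monomorphism is an injective homomorphism. A graph $G$ is $\mathcal{C}$-$\mathrm{MH}$ if every monomorphism from a finite connected induced subgraph of $G$ into $G$ extends to a homomorphism $G\to G$. $L(K_{s,s})$ has vertex set $\{1,\dots,s\}^2$ with $(u,i)\sim(v,j)$ iff exactly one of $u=v$, $i=j$ holds (distinct vertices sharing a coordinate). The Petersen graph has as vertices the $2$-element subsets of $\{1,\dots,5\}$, adjacent iff disjoint. The Clebsch graph is the graph obtained from the $5$-dimensional cube $Q_5$ by identifying antipodal vertices. *)

theory Defs
  imports Main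
begin

text \<open>A graph is given by a vertex set V and a symmetric adjacency relation E.
  Subgraphs are induced, so a subgraph is determined by a vertex subset S of V.\<close>

definition connected_on :: "('a \<Rightarrow> 'a \<Rightarrow> bool) \<Rightarrow> 'a set \<Rightarrow> bool" where
  "connected_on E S \<longleftrightarrow> S \<noteq> {} \<and>
     (\<forall>x\<in>S. \<forall>y\<in>S. (\<lambda>a b. a \<in> S \<and> b \<in> S \<and> E a b)\<^sup>*\<^sup>* x y)"

definition is_hom :: "'a set \<Rightarrow> ('a \<Rightarrow> 'a \<Rightarrow> bool) \<Rightarrow> 'a set \<Rightarrow> ('a \<Rightarrow> 'a) \<Rightarrow> bool" where
  "is_hom V E S f \<longleftrightarrow> (\<forall>x\<in>S. f x \<in> V) \<and> (\<forall>x\<in>S. \<forall>y\<in>S. E x y \<longrightarrow> E (f x) (f y))"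

definition is_mono :: "'a set \<Rightarrow> ('a \<Rightarrow> 'a \<Rightarrow> bool) \<Rightarrow> 'a set \<Rightarrow> ('a \<Rightarrow> 'a) \<Rightarrow> bool" where
  "is_mono V E S f \<longleftrightarrow> is_hom V E S f \<and> inj_on f S"

definition C_MH :: "'a set \<Rightarrow> ('a \<Rightarrow> 'a \<Rightarrow> bool) \<Rightarrow> bool" where
  "C_MH V E \<longleftrightarrow> (\<forall>S f. S \<subseteq> V \<and> finite S \<and> connected_on E S \<and> is_mono V E S f \<longrightarrow>
     (\<exists>g. is_hom V E V g \<and> (\<forall>x\<in>S. g x = f x)))"

definition LK_verts :: "nat \<Rightarrow> (nat \<times> nat) set" where
  "LK_verts s = {1..s} \<times> {1..s}"

definition LK_adj :: "nat \<times> nat \<Rightarrow> nat \<times> nat \<Rightarrow> bool" where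
  "LK_adj p q \<longleftrightarrow> ((fst p = fst q) \<noteq> (snd p = snd q))"

definition petersen_verts :: "nat set set" where
  "petersen_verts = {A. A \<subseteq> {1..5} \<and> card A = 2}"

definition petersen_adj :: "nat set \<Rightarrow> nat set \<Rightarrow> bool" where
  "petersen_adj A B \<longleftrightarrow> A \<inter> B = {}"

text \<open>Clebsch graph: Q_5 (vertices = subsets of {0..4}, adjacent iff symmetric
  difference has one element) with antipodal vertices A, {0..4}-A identified.\<close>
definition Q5_adj :: "nat set \<Rightarrow> nat set \<Rightarrow> bool" where
  "Q5_adj A B \<longleftrightarrow> card ((A - B) \<union> (B - A)) = 1"

definition clebsch_verts :: "nat set set set" where
  "clebsch_verts = {{A, {0..4} - A} | A. A \<subseteq> {0..4}}"

definition clebsch_adj :: "nat set set \<Rightarrow> nat set set \<Rightarrow> bool" where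
  "clebsch_adj X Y \<longleftrightarrow> (\<exists>A\<in>X. \<exists>B\<in>Y. Q5_adj A B)"

end

theory Submission imports Defs begin

definition cv :: "nat set \<Rightarrow> nat set set" where "cv A = {A, {0..4} - A}"

lemma cardU: "card {0..4::nat} = 5" by simp

lemma cadj:
  assumes A: "A \<subseteq> {0..4::nat}" and B: "B \<subseteq> {0..4}"
  shows "clebsch_adj (cv A) (cv B) \<longleftrightarrow> card ((A - B) \<union> (B - A)) \<in> {1,4}"
proof -
  define U :: "nat set" where "U = {0..4}"
  define D where "D = (A - B) \<union> (B - A)"
  have DU: "D \<subseteq> U" using A B by (auto simp: D_def U_def)
  have e1: "(A - (U - B)) \<union> ((U - B) - A) = U - D" using A B by (auto simp: D_def U_def)
  have e2: "((U - A) - B) \<union> (B - (U - A)) = U - D" using A B by (auto simp: D_def U_def)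
  have e3: "((U - A) - (U - B)) \<union> ((U - B) - (U - A)) = D" using A B by (auto simp: D_def U_def)
  have fU: "finite U" by (simp add: U_def)
  have c: "card (U - D) = 5 - card D" using DU fU by (simp add: card_Diff_subset finite_subset U_def)
  have cl: "card D \<le> 5" using card_mono[OF fU DU] by (simp add: U_def)
  have "clebsch_adj (cv A) (cv B) \<longleftrightarrow> card D = 1 \<or> card (U - D) = 1"
    unfolding clebsch_adj_def cv_def Q5_adj_def U_def[symmetric]
    using e1 e2 e3 by (auto simp: D_def)
  also have "\<dots> \<longleftrightarrow> card D \<in> {1,4}" using c cl by auto
  finally show ?thesis by (simp add: D_def)
qed

lemma cle_contra:
  assumes C: "C \<subseteq> {0..4::nat}" and h1: "card C \<in> {1,4}" and h2: "card ((C - {0}) \<union> ({0} - C)) \<in> {1,4}"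
  shows False
proof (cases "0 \<in> C")
  case True
  have fC: "finite C" using C finite_subset by blast
  have "(C - {0}) \<union> ({0} - C) = C - {0}" using True by auto
  then have "card ((C - {0}) \<union> ({0} - C)) = card C - 1" using True fC by simp
  moreover have "card C \<ge> 1" using True fC card_0_eq by fastforce
  ultimately show False using h1 h2 by auto
next
  case False
  have fC: "finite C" using C finite_subset by blast
  have "(C - {0}) \<union> ({0} - C) = insert 0 C" using False by auto
  then have "card ((C - {0}) \<union> ({0} - C)) = card C + 1" using False fC by simp
  then show False using h1 h2 by auto
qed

lemma cveq: "A \<subseteq> {0..4} \<Longrightarrow> B \<subseteq> {0..4} \<Longrightarrow> cv A = cv B \<longleftrightarrow> A = B \<or> A = {0..4::nat} - B"
  unfolding cv_def by (auto simp: doubleton_eq_iff)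

lemma step1: "R a b \<Longrightarrow> R\<^sup>*\<^sup>* a b" by blast
lemma step2: "R a b \<Longrightarrow> R\<^sup>*\<^sup>* b c \<Longrightarrow> R\<^sup>*\<^sup>* a c"
  by (rule converse_rtranclp_into_rtranclp)

lemma pet_contra:
  assumes "B \<in> petersen_verts" "petersen_adj B {1,2}" "petersen_adj B {4,5}"
  shows False
proof -
  have "B \<subseteq> {3}"
  proof
    fix x assume x: "x \<in> B"
    then have "x \<in> {1..5}" "x \<noteq> 1" "x \<noteq> 2" "x \<noteq> 4" "x \<noteq> 5"
      using assms by (auto simp: petersen_verts_def petersen_adj_def)
    then show "x \<in> {3}" by auto
  qed
  then have "card B \<le> 1" using card_mono[of "{3::nat}" B] by simp
  then show False using assms(1) by (simp add: petersen_verts_def)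
qed

lemma pet_S_hom:
  "\<forall>x\<in>{{3,4},{1,5},{2,3},{1,4},{3,5::nat}}. \<forall>y\<in>{{3,4},{1,5},{2,3},{1,4},{3,5::nat}}.
     petersen_adj x y \<longrightarrow> petersen_adj (f x) (f y)"
  if "f {3,4} = {1,2}" "f {1,5} = {3,4}" "f {2,3} = {1,5}" "f {1,4} = {2,3}" "f {3,5} = {4,5}"
  using that by (simp add: petersen_adj_def)
lemma rtranclp_sym_swap:
  assumes sym: "\<And>a b. R a b \<Longrightarrow> R b a" and "R\<^sup>*\<^sup>* x y"
  shows "R\<^sup>*\<^sup>* y x"
  using assms(2)
proof (induction rule: rtranclp_induct)
  case base then show ?case by simp
next
  case (step y z)
  then show ?case by (meson converse_rtranclp_into_rtranclp sym)
qed

lemma conn_hub: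
  assumes "v \<in> S" "\<And>a b. E a b \<Longrightarrow> E b a"
    "\<forall>x\<in>S. (\<lambda>a b. a \<in> S \<and> b \<in> S \<and> E a b)\<^sup>*\<^sup>* x v"
  shows "connected_on E S"
proof -
  let ?R = "\<lambda>a b. a \<in> S \<and> b \<in> S \<and> E a b"
  have sym: "\<And>a b. ?R a b \<Longrightarrow> ?R b a" using assms(2) by blast
  show ?thesis unfolding connected_on_def
  proof (intro conjI ballI)
    show "S \<noteq> {}" using assms(1) by blast
  next
    fix x y assume "x \<in> S" "y \<in> S"
    then have "?R\<^sup>*\<^sup>* x v" "?R\<^sup>*\<^sup>* y v" using assms(3) by blast+
    then have "?R\<^sup>*\<^sup>* x v" "?R\<^sup>*\<^sup>* v y" by (auto intro: rtranclp_sym_swap[where R="?R", OF sym])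
    then show "?R\<^sup>*\<^sup>* x y" by (rule rtranclp_trans)
  qed
qed

lemma pet_part: "\<not> C_MH petersen_verts petersen_adj"
proof
  assume H: "C_MH petersen_verts petersen_adj"
  define S where "S = ({{3,4},{1,5},{2,3},{1,4},{3,5}} :: nat set set)"
  define f where "f = (\<lambda>X::nat set. if X = {3,4} then {1,2} else if X = {1,5} then {3,4}
     else if X = {2,3} then {1,5} else if X = {1,4} then {2,3} else ({4,5}::nat set))"
  have fv: "f {3,4} = {1,2}" "f {1,5} = {3,4}" "f {2,3} = {1,5}" "f {1,4} = {2,3}" "f {3,5} = {4,5}"
    by (auto simp: f_def doubleton_eq_iff)
  have sub: "S \<subseteq> petersen_verts" by (auto simp: S_def petersen_verts_def)
  have fin: "finite S" by (simp add: S_def)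
  have con: "connected_on petersen_adj S"
  proof (rule conn_hub[where v="{2,3}"])
    show "{2,3} \<in> S" by (simp add: S_def)
    show "\<And>a b. petersen_adj a b \<Longrightarrow> petersen_adj b a" by (auto simp: petersen_adj_def)
    let ?R = "\<lambda>a b. a \<in> S \<and> b \<in> S \<and> petersen_adj a b"
    have "?R {1,5} {2,3}" "?R {1,4} {2,3}" "?R {3,4} {1,5}" "?R {3,5} {1,4}" by (auto simp: S_def petersen_adj_def)
    then have "?R\<^sup>*\<^sup>* {1,5} {2,3}" "?R\<^sup>*\<^sup>* {1,4} {2,3}" "?R\<^sup>*\<^sup>* {3,4} {2,3}" "?R\<^sup>*\<^sup>* {3,5} {2,3}" "?R\<^sup>*\<^sup>* {2,3} {2,3}"
      by (auto intro: step1 step2)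
    then show "\<forall>x\<in>S. ?R\<^sup>*\<^sup>* x {2,3}" by (simp add: S_def)
  qed
  have mono: "is_mono petersen_verts petersen_adj S f"
    unfolding is_mono_def is_hom_def
  proof (intro conjI)
    show "\<forall>x\<in>S. f x \<in> petersen_verts" using fv by (simp add: S_def petersen_verts_def)
    show "\<forall>x\<in>S. \<forall>y\<in>S. petersen_adj x y \<longrightarrow> petersen_adj (f x) (f y)"
      using fv by (simp add: S_def petersen_adj_def)
    show "inj_on f S" using fv by (auto simp: S_def inj_on_def doubleton_eq_iff)
  qed
  obtain g where g: "is_hom petersen_verts petersen_adj petersen_verts g" "\<forall>x\<in>S. g x = f x"
    using H sub fin con mono unfolding C_MH_def by blast
  have m: "{1,2} \<in> petersen_verts" "{3,4} \<in> petersen_verts" "{3,5} \<in> petersen_verts"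
    by (auto simp: petersen_verts_def)
  have "petersen_adj (g {1,2}) (g {3,4})" "petersen_adj (g {1,2}) (g {3,5})" "g {1,2} \<in> petersen_verts"
    using g(1) m unfolding is_hom_def by (auto simp: petersen_adj_def)
  moreover have "g {3,4} = {1,2}" "g {3,5} = {4,5}"
    using g(2) fv by (auto simp: S_def)
  ultimately show False using pet_contra by auto
qed
lemma cv_in: "A \<subseteq> {0..4} \<Longrightarrow> cv A \<in> clebsch_verts"
  unfolding cv_def clebsch_verts_def by blast

lemma U: "{0..4::nat} = {0,1,2,3,4}" by auto
lemma cv_neq:
  assumes "\<exists>x. x \<in> A \<and> x \<notin> B \<or> x \<in> B \<and> x \<notin> A"
    "\<exists>x. x \<in> A \<and> x \<in> B \<or> x \<in> {0,1,2,3,4} \<and> x \<notin> A \<and> x \<notin> B"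
  shows "cv A \<noteq> cv B"
  using assms unfolding cv_def U by (auto simp: doubleton_eq_iff)
lemma cvne0: "cv {0,3} \<noteq> cv {3}" by (rule cv_neq) (simp_all add: conj_disj_distribR ex_disj_distrib)
lemma cvne1: "cv {2,4} \<noteq> cv {3}" by (rule cv_neq) (simp_all add: conj_disj_distribR ex_disj_distrib)
lemma cvne2: "cv {2,4} \<noteq> cv {0,3}" by (rule cv_neq) (simp_all add: conj_disj_distribR ex_disj_distrib)
lemma cvne3: "cv {0,1} \<noteq> cv {3}" by (rule cv_neq) (simp_all add: conj_disj_distribR ex_disj_distrib)
lemma cvne4: "cv {0,1} \<noteq> cv {0,3}" by (rule cv_neq) (simp_all add: conj_disj_distribR ex_disj_distrib)
lemma cvne5: "cv {0,1} \<noteq> cv {2,4}" by (rule cv_neq) (simp_all add: conj_disj_distribR ex_disj_distrib)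
lemma cvne6: "cv {1} \<noteq> cv {3}" by (rule cv_neq) (simp_all add: conj_disj_distribR ex_disj_distrib)
lemma cvne7: "cv {1} \<noteq> cv {0,3}" by (rule cv_neq) (simp_all add: conj_disj_distribR ex_disj_distrib)
lemma cvne8: "cv {1} \<noteq> cv {2,4}" by (rule cv_neq) (simp_all add: conj_disj_distribR ex_disj_distrib)
lemma cvne9: "cv {1} \<noteq> cv {0,1}" by (rule cv_neq) (simp_all add: conj_disj_distribR ex_disj_distrib)
lemma cvne10: "cv {3} \<noteq> cv {}" by (rule cv_neq) (simp_all add: conj_disj_distribR ex_disj_distrib)
lemma cvne11: "cv {3,4} \<noteq> cv {}" by (rule cv_neq) (simp_all add: conj_disj_distribR ex_disj_distrib)
lemma cvne12: "cv {3,4} \<noteq> cv {3}" by (rule cv_neq) (simp_all add: conj_disj_distribR ex_disj_distrib)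
lemma cvne13: "cv {0,1} \<noteq> cv {}" by (rule cv_neq) (simp_all add: conj_disj_distribR ex_disj_distrib)
lemma cvne14: "cv {0,1} \<noteq> cv {3,4}" by (rule cv_neq) (simp_all add: conj_disj_distribR ex_disj_distrib)
lemma cvne15: "cv {0} \<noteq> cv {}" by (rule cv_neq) (simp_all add: conj_disj_distribR ex_disj_distrib)
lemma cvne16: "cv {0} \<noteq> cv {3}" by (rule cv_neq) (simp_all add: conj_disj_distribR ex_disj_distrib)
lemma cvne17: "cv {0} \<noteq> cv {3,4}" by (rule cv_neq) (simp_all add: conj_disj_distribR ex_disj_distrib)
lemma cvne18: "cv {0} \<noteq> cv {0,1}" by (rule cv_neq) (simp_all add: conj_disj_distribR ex_disj_distrib)
lemmas cvne = cvne0 cvne1 cvne2 cvne3 cvne4 cvne5 cvne6 cvne7 cvne8 cvne9 cvne10 cvne11 cvne12 cvne13 cvne14 cvne15 cvne16 cvne17 cvne18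

lemma cle_part: "\<not> C_MH clebsch_verts clebsch_adj"
proof
  assume H: "C_MH clebsch_verts clebsch_adj"
  define S where "S = {cv {3}, cv {0,3}, cv {2,4}, cv {0,1}, cv {1}}"
  define f where "f = (\<lambda>X. if X = cv {3} then cv {} else if X = cv {0,3} then cv {3}
     else if X = cv {2,4} then cv {3,4} else if X = cv {0,1} then cv {0,1} else cv {0})"
  have fv: "f (cv {3}) = cv {}" "f (cv {0,3}) = cv {3}" "f (cv {2,4}) = cv {3,4}"
     "f (cv {0,1}) = cv {0,1}" "f (cv {1}) = cv {0}"
    unfolding f_def using cvne by (simp_all add: eq_commute[of "cv _" "cv _"])
  have sub: "S \<subseteq> clebsch_verts" by (auto simp: S_def intro!: cv_in)
  have fin: "finite S" by (simp add: S_def)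
  have sym: "\<And>a b. clebsch_adj a b \<Longrightarrow> clebsch_adj b a"
    unfolding clebsch_adj_def Q5_adj_def by (metis Un_commute)
  have con: "connected_on clebsch_adj S"
  proof (rule conn_hub[where v="cv {2,4}"])
    show "cv {2,4} \<in> S" by (simp add: S_def)
    show "\<And>a b. clebsch_adj a b \<Longrightarrow> clebsch_adj b a" by (rule sym)
    let ?R = "\<lambda>a b. a \<in> S \<and> b \<in> S \<and> clebsch_adj a b"
    have "?R (cv {3}) (cv {0,3})" "?R (cv {0,3}) (cv {2,4})" "?R (cv {0,1}) (cv {2,4})" "?R (cv {1}) (cv {0,1})"
      by (auto simp: S_def cadj)
    then have "?R\<^sup>*\<^sup>* (cv {3}) (cv {2,4})" "?R\<^sup>*\<^sup>* (cv {0,3}) (cv {2,4})" "?R\<^sup>*\<^sup>* (cv {0,1}) (cv {2,4})"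
       "?R\<^sup>*\<^sup>* (cv {1}) (cv {2,4})" "?R\<^sup>*\<^sup>* (cv {2,4}) (cv {2,4})"
      by (auto intro: step1 step2)
    then show "\<forall>x\<in>S. ?R\<^sup>*\<^sup>* x (cv {2,4})" by (simp add: S_def)
  qed
  have mono: "is_mono clebsch_verts clebsch_adj S f"
    unfolding is_mono_def is_hom_def
  proof (intro conjI)
    show "\<forall>x\<in>S. f x \<in> clebsch_verts" using fv by (simp add: S_def cv_in)
    show "\<forall>x\<in>S. \<forall>y\<in>S. clebsch_adj x y \<longrightarrow> clebsch_adj (f x) (f y)"
      using fv by (simp add: S_def cadj)
    show "inj_on f S" using fv cvne unfolding S_def inj_on_def by (simp add: eq_commute[of "cv _" "cv _"])
  qed
  obtain g where g: "is_hom clebsch_verts clebsch_adj clebsch_verts g" "\<forall>x\<in>S. g x = f x"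
    using H sub fin con mono unfolding C_MH_def by blast
  have m: "cv {} \<in> clebsch_verts" "cv {3} \<in> clebsch_verts" "cv {1} \<in> clebsch_verts"
    by (auto intro!: cv_in)
  have a: "clebsch_adj (cv {}) (cv {3})" "clebsch_adj (cv {}) (cv {1})" by (simp_all add: cadj)
  have "clebsch_adj (g (cv {})) (g (cv {3}))" "clebsch_adj (g (cv {})) (g (cv {1}))" "g (cv {}) \<in> clebsch_verts"
    using g(1) m a unfolding is_hom_def by blast+
  moreover have "g (cv {3}) = cv {}" "g (cv {1}) = cv {0}"
    using g(2) fv by (auto simp: S_def)
  moreover obtain C where C: "C \<subseteq> {0..4}" "g (cv {}) = cv C"
    using \<open>g (cv {}) \<in> clebsch_verts\<close> unfolding clebsch_verts_def cv_def by blast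
  ultimately have "card C \<in> {1,4}" "card ((C - {0}) \<union> ({0} - C)) \<in> {1,4}"
    by (auto simp: cadj)
  then show False using cle_contra C(1) by blast
qed
lemma LK_part:
  assumes "(s::nat) > 2"
  shows "\<not> C_MH (LK_verts s) LK_adj"
proof
  assume H: "C_MH (LK_verts s) LK_adj"
  define S where "S = ({(2,1),(2,2),(1,2),(1,3)} :: (nat\<times>nat) set)"
  define f where "f = (\<lambda>p::nat\<times>nat. if p = (2,1) then (2,1) else if p = (2,2) then (3,1)
     else if p = (1,2) then (1,1) else (1::nat,2::nat))"
  have sub: "S \<subseteq> LK_verts s" using assms by (auto simp: S_def LK_verts_def)
  have fin: "finite S" by (simp add: S_def)
  have con: "connected_on LK_adj S"
  proof (rule conn_hub[where v="(2,2)"])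
    show "(2,2) \<in> S" by (simp add: S_def)
    show "\<And>a b. LK_adj a b \<Longrightarrow> LK_adj b a" by (auto simp: LK_adj_def)
    let ?R = "\<lambda>a b. a \<in> S \<and> b \<in> S \<and> LK_adj a b"
    have "?R (2,1) (2,2)" "?R (1,2) (2,2)" "?R (1,3) (1,2)" by (auto simp: S_def LK_adj_def)
    then have "?R\<^sup>*\<^sup>* (2,1) (2,2)" "?R\<^sup>*\<^sup>* (1,2) (2,2)" "?R\<^sup>*\<^sup>* (1,3) (2,2)" "?R\<^sup>*\<^sup>* (2,2) (2,2)"
      by (auto intro: step1 step2)
    then show "\<forall>x\<in>S. ?R\<^sup>*\<^sup>* x (2,2)" by (simp add: S_def)
  qed
  have mono: "is_mono (LK_verts s) LK_adj S f"
    using assms by (auto simp: is_mono_def is_hom_def S_def f_def LK_verts_def LK_adj_def inj_on_def)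
  obtain g where g: "is_hom (LK_verts s) LK_adj (LK_verts s) g" "\<forall>x\<in>S. g x = f x"
    using H sub fin con mono unfolding C_MH_def by blast
  have m: "(1,1) \<in> LK_verts s" "(1,2) \<in> LK_verts s" "(2,1) \<in> LK_verts s" "(1,3) \<in> LK_verts s"
    using assms by (auto simp: LK_verts_def)
  have "LK_adj (g (1,1)) (g (1,2))" "LK_adj (g (1,1)) (g (2,1))" "LK_adj (g (1,1)) (g (1,3))"
    using g(1) m unfolding is_hom_def by (auto simp: LK_adj_def)
  moreover have "g (1,2) = (1,1)" "g (2,1) = (2,1)" "g (1,3) = (1,2)"
    using g(2) by (auto simp: S_def f_def)
  ultimately show False
    by (cases "g (1,1)") (auto simp: LK_adj_def)
qed

theorem lemma7p1:
  shows "(\<forall>s::nat. s > 2 \<longrightarrow> \<not> C_MH (LK_verts s) LK_adj)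
    \<and> \<not> C_MH petersen_verts petersen_adj
    \<and> \<not> C_MH clebsch_verts clebsch_adj"
  using LK_part pet_part cle_part by blast

end
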